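(* Let $k\ge 2$ be an integer. For any positive integer $N$, \[ \widetilde{Z}_k(N)=\sum_{\substack{c\in\mathbb{N}\\ N\mid c}} z_k(c), \qquad\text{where}\qquad z_k(c):=\sum_{\substack{r\in\mathbb{N}\\ r\ge c}}\ \sum_{d\in\mathbb{N}}\mu(d)\,\mu_{k+1}(dr)\prod_{p\mid dr}\frac{1}{(p^k-1)^2}. \]
   Context: $\mu$ is the Möbius function, $\mu_{k+1}(q)$ is the indicator function of the $(k+1)$-free positive integers, and $p$ always denotes a prime. For $N\in\mathbb{N}$, \[ \widetilde{Z}_k(N):=\sum_{q\in\mathbb{N}}\mu_{k+1}(q)\Bigl(\prod_{p\mid q}\frac{1}{(p^k-1)^2}\Bigr)\#\{m\in\mathbb{N}\cap[1,q/N]:\gcd(m,q)=1\}. \] *)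

theory Defs
  imports "HOL-Analysis.Analysis" "HOL-Computational_Algebra.Computational_Algebra"
begin

definition mobius :: "nat \<Rightarrow> real" where
  "mobius n = (if n = 0 then 0 else if squarefree n then (-1) ^ card (prime_factors n) else 0)"

definition free_ind :: "nat \<Rightarrow> nat \<Rightarrow> real" where
  "free_ind j n = (if n \<ge> 1 \<and> (\<forall>p. prime p \<longrightarrow> \<not> p ^ j dvd n) then 1 else 0)"

definition wprod :: "nat \<Rightarrow> nat \<Rightarrow> real" where
  "wprod k n = (\<Prod>p\<in>prime_factors n. 1 / (real p ^ k - 1)\<^sup>2)"

definition Ztilde :: "nat \<Rightarrow> nat \<Rightarrow> real" where
  "Ztilde k N = (\<Sum>\<^sub>\<infinity>q\<in>{1..}. free_ind (k+1) q * wprod k q *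
      real (card {m::nat. 1 \<le> m \<and> real m \<le> real q / real N \<and> coprime m q}))"

definition zk :: "nat \<Rightarrow> nat \<Rightarrow> real" where
  "zk k c = (\<Sum>\<^sub>\<infinity>r\<in>{r. r \<ge> 1 \<and> r \<ge> c}. \<Sum>\<^sub>\<infinity>d\<in>{1..}.
      mobius d * free_ind (k+1) (d * r) * wprod k (d * r))"

end

theory Submission
  imports Defs
begin

definition pw :: "nat set \<Rightarrow> (nat \<Rightarrow> nat) \<Rightarrow> nat" where
  "pw P e = (\<Prod>p\<in>P. p ^ e p)"

lemma pw_pos: "(\<And>p. p \<in> P \<Longrightarrow> prime p) \<Longrightarrow> pw P e > 0"
  unfolding pw_def by (intro prod_pos) (auto simp: prime_gt_0_nat)

lemma mult_pw:
  assumes "finite P" "\<And>p. p \<in> P \<Longrightarrow> prime p" "prime p"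
  shows "multiplicity p (pw P e) = (if p \<in> P then e p else 0)"
  unfolding pw_def by (rule multiplicity_prod_prime_powers) (use assms in auto)

lemma pf_pw:
  assumes "finite P" "\<And>p. p \<in> P \<Longrightarrow> prime p"
  shows "prime_factors (pw P e) = {p\<in>P. e p > 0}"
  using assms by (auto simp: prime_factors_multiplicity mult_pw split: if_splits)

lemma pw_cong: "(\<And>p. p \<in> P \<Longrightarrow> e p = e' p) \<Longrightarrow> pw P e = pw P e'"
  unfolding pw_def by (rule prod.cong) auto

lemma pw_repr:
  assumes "(x::nat) > 0" "finite P" "prime_factors x \<subseteq> P" "\<And>p. p \<in> P \<Longrightarrow> prime p"
  shows "pw P (\<lambda>p. multiplicity p x) = x"
proof -
  have "pw P (\<lambda>p. multiplicity p x) = (\<Prod>p\<in>prime_factors x. p ^ multiplicity p x)"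
    unfolding pw_def
    by (rule prod.mono_neutral_right) (use assms in \<open>auto simp: prime_factors_multiplicity\<close>)
  also have "\<dots> = x" using prime_factorization_nat[OF assms(1)] by simp
  finally show ?thesis .
qed

lemma bij_pw:
  assumes "finite P" "\<And>p. p \<in> P \<Longrightarrow> prime p"
  shows "bij_betw (pw P) (PiE P (\<lambda>p. {0..b p}))
           {x. x > 0 \<and> prime_factors x \<subseteq> P \<and> (\<forall>p\<in>P. multiplicity p x \<le> b p)}"
proof (rule bij_betw_byWitness[where f' = "\<lambda>x. restrict (\<lambda>p. multiplicity p x) P"])
  show "\<forall>a\<in>PiE P (\<lambda>p. {0..b p}). restrict (\<lambda>p. multiplicity p (pw P a)) P = a"
    using assms by (auto simp: mult_pw PiE_def extensional_def restrict_def fun_eq_iff)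
  show "\<forall>a'\<in>{x. x > 0 \<and> prime_factors x \<subseteq> P \<and> (\<forall>p\<in>P. multiplicity p x \<le> b p)}.
          pw P (restrict (\<lambda>p. multiplicity p a') P) = a'"
  proof
    fix x assume x: "x \<in> {x. x > 0 \<and> prime_factors x \<subseteq> P \<and> (\<forall>p\<in>P. multiplicity p x \<le> b p)}"
    have "pw P (restrict (\<lambda>p. multiplicity p x) P) = pw P (\<lambda>p. multiplicity p x)"
      by (rule pw_cong) auto
    also have "\<dots> = x" using x assms by (intro pw_repr) auto
    finally show "pw P (restrict (\<lambda>p. multiplicity p x) P) = x" .
  qed
  show "pw P ` PiE P (\<lambda>p. {0..b p}) \<subseteq> {x. x > 0 \<and> prime_factors x \<subseteq> P \<and> (\<forall>p\<in>P. multiplicity p x \<le> b p)}"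
    using assms by (auto simp: pw_pos pf_pw mult_pw PiE_def Pi_def)
  show "(\<lambda>x. restrict (\<lambda>p. multiplicity p x) P) ` {x. x > 0 \<and> prime_factors x \<subseteq> P \<and> (\<forall>p\<in>P. multiplicity p x \<le> b p)} \<subseteq> PiE P (\<lambda>p. {0..b p})"
    by auto
qed

lemma divisors_char:
  assumes "(n::nat) > 0"
  shows "{d. d dvd n} = {x. x > 0 \<and> prime_factors x \<subseteq> prime_factors n \<and>
           (\<forall>p\<in>prime_factors n. multiplicity p x \<le> multiplicity p n)}"
proof (intro set_eqI iffI)
  fix d assume "d \<in> {d. d dvd n}"
  hence d: "d dvd n" by simp
  hence "d > 0" using assms by (auto intro: Nat.gr0I)
  moreover have "prime_factors d \<subseteq> prime_factors n"
    using d assms by (auto simp: prime_factors_dvd intro: dvd_trans)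
  moreover have "\<forall>p\<in>prime_factors n. multiplicity p d \<le> multiplicity p n"
    using d assms by (auto intro: dvd_imp_multiplicity_le)
  ultimately show "d \<in> {x. x > 0 \<and> prime_factors x \<subseteq> prime_factors n \<and>
           (\<forall>p\<in>prime_factors n. multiplicity p x \<le> multiplicity p n)}" by auto
next
  fix x assume x: "x \<in> {x. x > 0 \<and> prime_factors x \<subseteq> prime_factors n \<and>
           (\<forall>p\<in>prime_factors n. multiplicity p x \<le> multiplicity p n)}"
  have "x dvd n"
  proof (rule multiplicity_le_imp_dvd)
    show "x \<noteq> 0" using x by auto
    fix p :: nat assume p: "prime p"
    show "multiplicity p x \<le> multiplicity p n"
    proof (cases "p \<in> prime_factors n")
      case True thus ?thesis using x by auto
    next
      case False
      hence "p \<notin> prime_factors x" using x by auto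
      hence "multiplicity p x = 0" using p by (auto simp: prime_factors_multiplicity)
      thus ?thesis by simp
    qed
  qed
  thus "x \<in> {d. d dvd n}" by simp
qed

lemma divisors_bij:
  assumes "(n::nat) > 0"
  shows "bij_betw (pw (prime_factors n)) (PiE (prime_factors n) (\<lambda>p. {0..multiplicity p n})) {d. d dvd n}"
  unfolding divisors_char[OF assms] by (rule bij_pw) auto

lemma card_divisors:
  assumes "(n::nat) > 0"
  shows "card {d. d dvd n} = (\<Prod>p\<in>prime_factors n. Suc (multiplicity p n))"
  using bij_betw_same_card[OF divisors_bij[OF assms]] by (simp add: card_PiE)

definition mu1 :: "nat \<Rightarrow> real" where
  "mu1 j = (if j = 0 then 1 else if j = 1 then -1 else 0)"

lemma mobius_pw:
  assumes "finite P" "\<And>p. p \<in> P \<Longrightarrow> prime p"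
  shows "mobius (pw P e) = (\<Prod>p\<in>P. mu1 (e p))"
proof -
  define x where "x = pw P e"
  have x0: "x > 0" unfolding x_def by (rule pw_pos[OF assms(2)])
  have mx: "multiplicity p x = (if p \<in> P then e p else 0)" if "prime p" for p
    unfolding x_def using assms that by (rule mult_pw)
  show ?thesis
  proof (cases "\<exists>p\<in>P. e p \<ge> 2")
    case True
    then obtain p where p: "p \<in> P" "e p \<ge> 2" by auto
    have "\<not> squarefree x"
      using squarefree_factorial_semiring''[of x] x0 p mx[of p] assms(2)[OF p(1)] by auto
    hence "mobius x = 0" unfolding mobius_def by simp
    moreover have "(\<Prod>p\<in>P. mu1 (e p)) = 0"
      using p assms(1) by (auto simp: mu1_def intro!: bexI[of _ p])
    ultimately show ?thesis by (simp add: x_def)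
  next
    case False
    hence le1: "\<forall>p\<in>P. e p \<le> 1" by auto
    have "squarefree x"
      using squarefree_factorial_semiring''[of x] x0 mx le1 by (auto)
    moreover have pf: "prime_factors x = {p\<in>P. e p = 1}"
      unfolding x_def using pf_pw[OF assms] le1 by (auto simp: le_Suc_eq)
    ultimately have "mobius x = (-1) ^ card {p\<in>P. e p = 1}"
      unfolding mobius_def using x0 by simp
    moreover have "(\<Prod>p\<in>P. mu1 (e p)) = (\<Prod>p\<in>P. if e p = 1 then -1 else 1)"
      using le1 by (intro prod.cong) (auto simp: mu1_def le_Suc_eq)
    moreover have "\<dots> = (-1) ^ card {p\<in>P. e p = 1}"
      using assms(1) by (simp add: prod.If_cases Collect_conj_eq Int_commute)
    ultimately show ?thesis by (simp add: x_def)
  qed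
qed

lemma sum_mu1: "(\<Sum>j\<in>{0..Suc m}. mu1 j) = 0"
  by (induction m) (auto simp: mu1_def)

lemma mobius_divisor_sum:
  assumes "(n::nat) > 0"
  shows "(\<Sum>d\<in>{d. d dvd n}. mobius d) = (if n = 1 then 1 else 0)"
proof -
  define P where "P = prime_factors n"
  have fP: "finite P" and pP: "\<And>p. p \<in> P \<Longrightarrow> prime p" by (auto simp: P_def)
  have "(\<Sum>d\<in>{d. d dvd n}. mobius d) = (\<Sum>e\<in>PiE P (\<lambda>p. {0..multiplicity p n}). mobius (pw P e))"
    using sum.reindex_bij_betw[OF divisors_bij[OF assms], of mobius] by (simp add: P_def)
  also have "\<dots> = (\<Sum>e\<in>PiE P (\<lambda>p. {0..multiplicity p n}). \<Prod>p\<in>P. mu1 (e p))"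
    by (intro sum.cong refl mobius_pw fP pP)
  also have "\<dots> = (\<Prod>p\<in>P. \<Sum>j\<in>{0..multiplicity p n}. mu1 j)"
    by (rule prod_sum_PiE[symmetric]) (use fP in auto)
  also have "\<dots> = (\<Prod>p\<in>P. 0)"
  proof (intro prod.cong refl)
    fix p assume "p \<in> P"
    hence "multiplicity p n > 0" by (auto simp: P_def prime_factors_multiplicity)
    then obtain m where "multiplicity p n = Suc m" using gr0_implies_Suc by blast
    thus "(\<Sum>j\<in>{0..multiplicity p n}. mu1 j) = 0" using sum_mu1[of m] by simp
  qed
  also have "\<dots> = (if n = 1 then 1 else 0)"
  proof (cases "P = {}")
    case True
    hence "n = 1" using prime_factorization_nat[OF assms] by (simp add: P_def)
    thus ?thesis using True by simp
  next
    case False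
    hence "n \<noteq> 1" by (auto simp: P_def)
    thus ?thesis using False fP by (simp add: card_gt_0_iff)
  qed
  finally show ?thesis .
qed

definition Eset :: "nat \<Rightarrow> nat \<Rightarrow> (nat \<times> nat) set" where
  "Eset N q = {(d,c). d \<ge> 1 \<and> d dvd q \<and> c \<ge> 1 \<and> N dvd c \<and> c * d \<le> q}"

lemma Eset_sub: "Eset N q \<subseteq> {d. d dvd q} \<times> {1..q}"
proof
  fix x assume "x \<in> Eset N q"
  then obtain d c where x: "x = (d,c)" "d \<ge> 1" "d dvd q" "c \<ge> 1" "c * d \<le> q"
    by (auto simp: Eset_def)
  have "c \<le> c * d" using x by simp
  hence "c \<le> q" using x(5) by linarith
  thus "x \<in> {d. d dvd q} \<times> {1..q}" using x by auto
qed

lemma finite_Eset: "q > 0 \<Longrightarrow> finite (Eset N q)"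
  by (rule finite_subset[OF Eset_sub]) auto

lemma count_identity:
  assumes "(q::nat) > 0" "N > 0"
  shows "(\<Sum>(d,c)\<in>Eset N q. mobius d) =
         real (card {m::nat. 1 \<le> m \<and> real m \<le> real q / real N \<and> coprime m q})"
proof -
  define M where "M = {m. 1 \<le> m \<and> N * m \<le> q}"
  have "M \<subseteq> {..q}"
  proof
    fix m assume "m \<in> M"
    hence "N * m \<le> q" by (auto simp: M_def)
    moreover have "m \<le> N * m" using assms by simp
    ultimately have "m \<le> q" by (rule le_trans[rotated])
    thus "m \<in> {..q}" by simp
  qed
  hence fM: "finite M" by (rule finite_subset) auto
  define T where "T = Sigma M (\<lambda>m. {d. d dvd gcd m q})"
  have "(\<Sum>(d,c)\<in>Eset N q. mobius d) = (\<Sum>(m,d)\<in>T. mobius d)"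
  proof (rule sum.reindex_bij_witness[where j = "\<lambda>(d,c). (c div N * d, d)"
                                        and i = "\<lambda>(m,d). (d, N * (m div d))"])
    fix a assume a: "a \<in> Eset N q"
    then obtain d c where dc: "a = (d,c)" "d \<ge> 1" "d dvd q" "c \<ge> 1" "N dvd c" "c * d \<le> q"
      by (auto simp: Eset_def)
    then obtain t where t: "c = N * t" by (auto elim: dvdE)
    have t1: "t \<ge> 1" using dc t by (cases t) auto
    show "(case (case a of (d, c) \<Rightarrow> (c div N * d, d)) of (m, d) \<Rightarrow> (d, N * (m div d))) = a"
      using dc t assms by simp
    show "(case a of (d, c) \<Rightarrow> (c div N * d, d)) \<in> T"
      using dc t t1 assms by (auto simp: T_def M_def mult.assoc mult.commute)
    show "(case (case a of (d, c) \<Rightarrow> (c div N * d, d)) of (m, d) \<Rightarrow> mobius d) = (case a of (d, c) \<Rightarrow> mobius d)"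
      using dc by simp
  next
    fix b assume b: "b \<in> T"
    then obtain m d where md: "b = (m,d)" "1 \<le> m" "N * m \<le> q" "d dvd m" "d dvd q"
      by (auto simp: T_def M_def)
    then obtain s where s: "m = d * s" by (auto elim: dvdE)
    have d1: "d \<ge> 1" and s1: "s \<ge> 1" using md s by (cases d; cases s; auto)+
    show "(case (case b of (m, d) \<Rightarrow> (d, N * (m div d))) of (d, c) \<Rightarrow> (c div N * d, d)) = b"
      using md s d1 assms by simp
    show "(case b of (m, d) \<Rightarrow> (d, N * (m div d))) \<in> Eset N q"
      using md s d1 s1 assms by (auto simp: Eset_def mult.assoc mult.commute mult.left_commute)
  qed
  also have "\<dots> = (\<Sum>m\<in>M. \<Sum>d\<in>{d. d dvd gcd m q}. mobius d)"
    unfolding T_def by (rule sum.Sigma[symmetric]) (use fM assms in auto)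
  also have "\<dots> = (\<Sum>m\<in>M. if coprime m q then 1 else 0)"
  proof (intro sum.cong refl)
    fix m assume "m \<in> M"
    hence "gcd m q > 0" using assms by (auto simp: M_def)
    thus "(\<Sum>d\<in>{d. d dvd gcd m q}. mobius d) = (if coprime m q then 1 else 0)"
      using mobius_divisor_sum[of "gcd m q"] by (simp only: coprime_iff_gcd_eq_1)
  qed
  also have "\<dots> = real (card {m\<in>M. coprime m q})"
    using fM by (simp add: sum.If_cases Int_def conj_commute)
  also have "{m\<in>M. coprime m q} = {m::nat. 1 \<le> m \<and> real m \<le> real q / real N \<and> coprime m q}"
  proof -
    have "real m \<le> real q / real N \<longleftrightarrow> N * m \<le> q" for m
      using assms by (simp add: pos_le_divide_eq mult.commute flip: of_nat_mult)
    thus ?thesis by (auto simp: M_def)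
  qed
  finally show ?thesis .
qed

lemma inv_sq_sum: "M \<ge> 1 \<Longrightarrow> (\<Sum>n\<in>{1..M}. 1 / (real n)^2) \<le> 2 - 1 / real M"
proof (induction M rule: nat_induct_at_least)
  case base thus ?case by simp
next
  case (Suc M)
  have "(\<Sum>n\<in>{1..Suc M}. 1 / (real n)^2) = (\<Sum>n\<in>{1..M}. 1 / (real n)^2) + 1 / (real M + 1)^2"
    by simp
  also have "\<dots> \<le> 2 - 1 / real M + 1 / (real M + 1)^2" using Suc.IH by simp
  also have "\<dots> \<le> 2 - 1 / real (Suc M)"
  proof -
    have M: "real M \<ge> 1" using Suc.hyps by simp
    have "1 / (real M + 1)^2 \<le> 1 / (real M * (real M + 1))"
      using M by (intro divide_left_mono) (auto simp: power2_eq_square)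
    also have "\<dots> = 1 / real M - 1 / (real M + 1)"
      using M by (simp add: field_simps)
    finally show ?thesis by (simp add: add.commute)
  qed
  finally show ?case .
qed

lemma psi_bound:
  assumes "prime p" "1 \<le> j" "j \<le> k" "k \<ge> 2"
  shows "real (j+1) * real p ^ j / ((real p) ^ k - 1)^2 \<le> 4 * real (k+1) / (real p)^2"
proof -
  have p2: "real p \<ge> 2" using prime_ge_2_nat[OF assms(1)] by simp
  define x where "x = real p ^ k"
  have xp: "(real p)^2 \<le> x" unfolding x_def using p2 assms(4) by (intro power_increasing) auto
  have "(2::real)^2 \<le> (real p)^2" by (rule power_mono) (use p2 in auto)
  hence p4: "(real p)^2 \<ge> 4" by simp
  hence x4: "x \<ge> 4" using xp by linarith
  have num: "real (j+1) * real p ^ j \<le> real (k+1) * x"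
  proof (intro mult_mono)
    show "real (j+1) \<le> real (k+1)" using assms by simp
    show "real p ^ j \<le> x" unfolding x_def using p2 assms by (intro power_increasing) auto
  qed auto
  have den: "x^2/4 \<le> (x - 1)^2"
  proof -
    have "(x-1)^2 - x^2/4 = (x-2)*(3*x-2)/4" by (simp add: power2_eq_square algebra_simps)
    moreover have "(x-2)*(3*x-2) \<ge> 0" using x4 by simp
    ultimately show ?thesis by simp
  qed
  have "real (j+1) * real p ^ j / ((real p) ^ k - 1)^2 = real (j+1) * real p ^ j / (x - 1)^2"
    by (simp add: x_def)
  also have "\<dots> \<le> real (k+1) * x / (x^2/4)"
    using num den x4 by (intro frac_le) auto
  also have "\<dots> = 4 * real (k+1) / x" using x4 by (simp add: field_simps power2_eq_square)
  also have "\<dots> \<le> 4 * real (k+1) / (real p)^2"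
    using xp p4 p2 by (intro divide_left_mono) (auto intro!: mult_pos_pos)
  finally show ?thesis .
qed

lemma free_ind_cases: "free_ind j n = 0 \<or> free_ind j n = 1"
  by (simp add: free_ind_def)

lemma free_ind_nonneg: "free_ind j n \<ge> 0"
  by (simp add: free_ind_def)

lemma wprod_nonneg: "wprod k n \<ge> 0"
  unfolding wprod_def by (intro prod_nonneg) auto

lemma free_mult:
  assumes "free_ind (k+1) q = 1"
  shows "q > 0" "\<And>p. prime p \<Longrightarrow> multiplicity p q \<le> k"
proof -
  have A: "q \<ge> 1" "\<And>p. prime p \<Longrightarrow> \<not> p ^ (k+1) dvd q"
    using assms by (auto simp: free_ind_def split: if_splits)
  thus "q > 0" by simp
  fix p :: nat assume p: "prime p"
  show "multiplicity p q \<le> k"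
  proof (rule ccontr)
    assume "\<not> multiplicity p q \<le> k"
    hence "k+1 \<le> multiplicity p q" by simp
    hence "p ^ (k+1) dvd q" by (rule multiplicity_dvd')
    with A(2)[OF p] show False by blast
  qed
qed

lemma euler_bound:
  fixes k :: nat
  assumes k: "k \<ge> 2" and fQ: "finite Q"
  shows "(\<Sum>q\<in>Q. free_ind (k+1) q * wprod k q * (real q * real (card {d. d dvd q})))
           \<le> exp (8 * real k * real (k+1))"
proof -
  define g where "g q = free_ind (k+1) q * wprod k q * (real q * real (card {d. d dvd q}))" for q
  define Q' where "Q' = {q\<in>Q. free_ind (k+1) q = 1}"
  have fQ': "finite Q'" using fQ by (simp add: Q'_def)
  have sumQ: "sum g Q = sum g Q'"
  proof (rule sum.mono_neutral_right)
    show "\<forall>i\<in>Q - Q'. g i = 0"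
      using free_ind_cases by (auto simp: Q'_def g_def)
  qed (use fQ in \<open>auto simp: Q'_def\<close>)
  define M where "M = Max (insert 0 Q)"
  define P where "P = {p. prime p \<and> p \<le> M}"
  have fP: "finite P" by (simp add: P_def)
  have pP: "\<And>p. p\<in>P \<Longrightarrow> prime p" by (simp add: P_def)
  define \<psi> where "\<psi> p j = (if j = 0 then 1 else real (j+1) * real p ^ j / ((real p)^k - 1)^2)"
    for p j :: nat
  have \<psi>_nonneg: "\<psi> p j \<ge> 0" for p j by (simp add: \<psi>_def)
  have qprops: "q > 0 \<and> prime_factors q \<subseteq> P \<and> (\<forall>p\<in>P. multiplicity p q \<le> k)"
    if q: "q \<in> Q'" for q
  proof -
    have f1: "free_ind (k+1) q = 1" using q by (simp add: Q'_def)
    have q0: "q > 0" by (rule free_mult(1)[OF f1])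
    have qM: "q \<le> M" unfolding M_def using q fQ by (auto simp: Q'_def)
    have "prime_factors q \<subseteq> P"
    proof
      fix p assume "p \<in> prime_factors q"
      hence "prime p" "p dvd q" by auto
      hence "p \<le> q" using q0 by (simp add: dvd_imp_le)
      thus "p \<in> P" using \<open>prime p\<close> qM by (simp add: P_def)
    qed
    moreover have "\<forall>p\<in>P. multiplicity p q \<le> k" using free_mult(2)[OF f1] pP by auto
    ultimately show ?thesis using q0 by simp
  qed
  have g_eq: "g q = (\<Prod>p\<in>P. \<psi> p (multiplicity p q))" if q: "q \<in> Q'" for q
  proof -
    have f1: "free_ind (k+1) q = 1" using q by (simp add: Q'_def)
    have q0: "q > 0" using qprops[OF q] by simp
    have "real q = real (\<Prod>p\<in>prime_factors q. p ^ multiplicity p q)"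
      by (rule arg_cong[where f=real, OF prime_factorization_nat[OF q0]])
    also have "\<dots> = (\<Prod>p\<in>prime_factors q. real p ^ multiplicity p q)" by simp
    finally have rq: "real q = (\<Prod>p\<in>prime_factors q. real p ^ multiplicity p q)" .
    have cq: "real (card {d. d dvd q}) = (\<Prod>p\<in>prime_factors q. real (Suc (multiplicity p q)))"
      by (simp add: card_divisors[OF q0])
    have "g q = wprod k q * (real q * real (card {d. d dvd q}))"
      using f1 by (simp add: g_def)
    also have "\<dots> = (\<Prod>p\<in>prime_factors q. 1 / ((real p)^k - 1)^2) *
                 ((\<Prod>p\<in>prime_factors q. real p ^ multiplicity p q) *
                  (\<Prod>p\<in>prime_factors q. real (Suc (multiplicity p q))))"
      by (simp only: wprod_def rq cq)
    also have "\<dots> = (\<Prod>p\<in>prime_factors q. 1 / ((real p)^k - 1)^2 *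
                 (real p ^ multiplicity p q * real (Suc (multiplicity p q))))"
      by (simp only: prod.distrib)
    also have "\<dots> = (\<Prod>p\<in>prime_factors q. \<psi> p (multiplicity p q))"
    proof (intro prod.cong refl)
      fix p assume "p \<in> prime_factors q"
      hence "multiplicity p q > 0" by (simp add: prime_factors_multiplicity)
      thus "1 / ((real p)^k - 1)^2 * (real p ^ multiplicity p q * real (Suc (multiplicity p q)))
            = \<psi> p (multiplicity p q)" by (simp add: \<psi>_def)
    qed
    also have "\<dots> = (\<Prod>p\<in>P. \<psi> p (multiplicity p q))"
    proof (rule prod.mono_neutral_left)
      show "\<forall>i\<in>P - prime_factors q. \<psi> i (multiplicity i q) = 1"
        using pP q0 by (auto simp: prime_factors_multiplicity \<psi>_def)
    qed (use fP qprops[OF q] in auto)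
    finally show ?thesis .
  qed
  define r where "r q = restrict (\<lambda>p. multiplicity p q) P" for q
  have inj: "inj_on r Q'"
  proof (rule inj_onI)
    fix a b assume a: "a \<in> Q'" and b: "b \<in> Q'" and ab: "r a = r b"
    have eq: "multiplicity p a = multiplicity p b" if "p \<in> P" for p
      using fun_cong[OF ab, of p] that by (simp add: r_def)
    have "a = pw P (\<lambda>p. multiplicity p a)"
      using qprops[OF a] fP pP by (intro pw_repr[symmetric]) auto
    also have "\<dots> = pw P (\<lambda>p. multiplicity p b)" by (rule pw_cong) (use eq in auto)
    also have "\<dots> = b"
      using qprops[OF b] fP pP by (intro pw_repr) auto
    finally show "a = b" .
  qed
  have "sum g Q' = (\<Sum>q\<in>Q'. \<Prod>p\<in>P. \<psi> p (r q p))"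
    by (intro sum.cong refl) (simp add: g_eq r_def)
  also have "\<dots> = (\<Sum>e\<in>r ` Q'. \<Prod>p\<in>P. \<psi> p (e p))"
    by (simp add: sum.reindex[OF inj] o_def)
  also have "\<dots> \<le> (\<Sum>e\<in>PiE P (\<lambda>_. {0..k}). \<Prod>p\<in>P. \<psi> p (e p))"
  proof (rule sum_mono2)
    show "finite (PiE P (\<lambda>_. {0..k}))" using fP by (simp add: finite_PiE)
    show "r ` Q' \<subseteq> PiE P (\<lambda>_. {0..k})"
      using qprops by (auto simp: r_def)
    show "\<And>b. b \<in> PiE P (\<lambda>_. {0..k}) - r ` Q' \<Longrightarrow> 0 \<le> (\<Prod>p\<in>P. \<psi> p (b p))"
      using \<psi>_nonneg by (auto intro: prod_nonneg)
  qed
  also have "\<dots> = (\<Prod>p\<in>P. \<Sum>j\<in>{0..k}. \<psi> p j)"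
    by (rule prod_sum_PiE[symmetric]) (use fP in auto)
  also have "\<dots> = (\<Prod>p\<in>P. 1 + (\<Sum>j\<in>{1..k}. \<psi> p j))"
  proof (intro prod.cong refl)
    fix p
    show "(\<Sum>j\<in>{0..k}. \<psi> p j) = 1 + (\<Sum>j\<in>{1..k}. \<psi> p j)"
      using sum.atLeast_Suc_atMost[of 0 k "\<psi> p"] by (simp add: \<psi>_def)
  qed
  also have "\<dots> \<le> exp (\<Sum>p\<in>P. \<Sum>j\<in>{1..k}. \<psi> p j)"
    by (rule prod_le_exp_sum) (use \<psi>_nonneg in \<open>auto intro: sum_nonneg\<close>)
  also have "\<dots> \<le> exp (8 * real k * real (k+1))"
  proof -
    have "(\<Sum>p\<in>P. \<Sum>j\<in>{1..k}. \<psi> p j) \<le> (\<Sum>p\<in>P. \<Sum>j\<in>{1..k}. 4 * real (k+1) / (real p)^2)"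
    proof (intro sum_mono)
      fix p j assume p: "p \<in> P" and j: "j \<in> {1..k}"
      show "\<psi> p j \<le> 4 * real (k+1) / (real p)^2"
        using psi_bound[OF pP[OF p], of j k] j k by (simp add: \<psi>_def)
    qed
    also have "\<dots> = (\<Sum>p\<in>P. (4 * real k * real (k+1)) * (1 / (real p)^2))"
      by (intro sum.cong refl) simp
    also have "\<dots> = 4 * real k * real (k+1) * (\<Sum>p\<in>P. 1 / (real p)^2)"
      by (rule sum_distrib_left[symmetric])
    also have "\<dots> \<le> 4 * real k * real (k+1) * 2"
    proof (rule mult_left_mono)
      have "(\<Sum>p\<in>P. 1 / (real p)^2) \<le> (\<Sum>n\<in>{1..max 1 M}. 1 / (real n)^2)"
      proof (rule sum_mono2)
        show "P \<subseteq> {1..max 1 M}"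
        proof
          fix p assume "p \<in> P"
          hence "prime p" "p \<le> M" by (auto simp: P_def)
          hence "p \<ge> 1" using prime_ge_1_nat by blast
          thus "p \<in> {1..max 1 M}" using \<open>p \<le> M\<close> by auto
        qed
      qed auto
      also have "\<dots> \<le> 2 - 1 / real (max 1 M)" by (rule inv_sq_sum) simp
      also have "\<dots> \<le> 2" by simp
      finally show "(\<Sum>p\<in>P. 1 / (real p)^2) \<le> 2" .
    qed simp
    finally show ?thesis by simp
  qed
  finally show ?thesis using sumQ by (simp add: g_def)
qed

theorem lemma2p2:
  fixes k N :: nat
  assumes "k \<ge> 2" and "N \<ge> 1"
  shows "(zk k has_sum Ztilde k N) {c. c \<ge> 1 \<and> N dvd c}"
proof -
  define fw where "fw q = free_ind (k+1) q * wprod k q" for q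
  define D :: "nat set" where "D = {1..}"
  define C where "C = {c::nat. c \<ge> 1 \<and> N dvd c}"
  define R where "R c = {r::nat. r \<ge> 1 \<and> r \<ge> c}" for c
  define X where "X = Sigma C (\<lambda>c. Sigma (R c) (\<lambda>_. D))"
  define Y where "Y = Sigma {1::nat..} (Eset N)"
  define G where "G = (\<lambda>(q::nat, (d::nat, c::nat)). mobius d * free_ind (k+1) q * wprod k q)"
  define F where "F = (\<lambda>(c::nat, (r::nat, d::nat)). mobius d * free_ind (k+1) (d*r) * wprod k (d*r))"
  define \<iota> where "\<iota> = (\<lambda>(c::nat, (r::nat, d::nat)). (d*r, (d, c)))"
  have N0: "N > 0" using assms by simp
  have fw_nonneg: "fw q \<ge> 0" for q by (simp add: fw_def free_ind_nonneg wprod_nonneg)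
  have bij: "bij_betw \<iota> X Y"
  proof (rule bij_betw_byWitness[where f' = "\<lambda>(q, (d, c)). (c, (q div d, d))"])
    show "\<forall>a\<in>X. (case \<iota> a of (q, d, c) \<Rightarrow> (c, q div d, d)) = a"
      by (auto simp: X_def D_def \<iota>_def)
    show "\<forall>a'\<in>Y. \<iota> (case a' of (q, d, c) \<Rightarrow> (c, q div d, d)) = a'"
      by (auto simp: Y_def Eset_def \<iota>_def)
    show "\<iota> ` X \<subseteq> Y"
    proof
      fix y assume "y \<in> \<iota> ` X"
      then obtain c r d where y: "y = (d*r, (d, c))" "c \<ge> 1" "N dvd c" "r \<ge> 1" "r \<ge> c" "d \<ge> 1"
        by (auto simp: X_def C_def R_def D_def \<iota>_def)
      have "c * d \<le> d * r" using y by (simp add: mult.commute)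
      moreover have "d * r \<ge> 1" using y by simp
      ultimately show "y \<in> Y" using y by (auto simp: Y_def Eset_def)
    qed
    show "(\<lambda>(q, d, c). (c, q div d, d)) ` Y \<subseteq> X"
    proof
      fix x assume "x \<in> (\<lambda>(q, d, c). (c, q div d, d)) ` Y"
      then obtain q d c where x: "x = (c, (q div d, d))" "d \<ge> 1" "d dvd q" "c \<ge> 1" "N dvd c" "c * d \<le> q"
        by (auto simp: Y_def Eset_def)
      then obtain t where t: "q = d * t" by (auto elim: dvdE)
      have "q div d = t" using t x by simp
      moreover have "c \<le> t" using x t by (simp add: mult.commute)
      ultimately show "x \<in> X" using x by (auto simp: X_def C_def R_def D_def)
    qed
  qed
  have FG: "G (\<iota> x) = F x" for x by (auto simp: G_def F_def \<iota>_def split: prod.splits)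
  have sumG: "G summable_on Y"
  proof -
    have "(\<lambda>x. norm (G x)) summable_on Y"
    proof (rule nonneg_bdd_above_summable_on)
      show "bdd_above (sum (\<lambda>x. norm (G x)) ` {F. F \<subseteq> Y \<and> finite F})"
      proof (rule bdd_aboveI2)
        fix F assume F: "F \<in> {F. F \<subseteq> Y \<and> finite F}"
        define Q where "Q = fst ` F"
        have fQ: "finite Q" using F by (simp add: Q_def)
        have Q1: "Q \<subseteq> {1..}" using F by (auto simp: Q_def Y_def)
        have fE: "\<And>q. q \<in> Q \<Longrightarrow> finite (Eset N q)" using Q1 by (intro finite_Eset) auto
        have FS: "F \<subseteq> Sigma Q (Eset N)" using F by (force simp: Q_def Y_def)
        have "(\<Sum>x\<in>F. norm (G x)) \<le> (\<Sum>x\<in>Sigma Q (Eset N). norm (G x))"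
          by (rule sum_mono2) (use fQ fE FS in auto)
        also have "\<dots> = (\<Sum>q\<in>Q. \<Sum>y\<in>Eset N q. norm (G (q,y)))"
          using sum.Sigma[of Q "Eset N" "\<lambda>q y. norm (G (q,y))"] fQ fE by (simp add: case_prod_beta)
        also have "\<dots> \<le> (\<Sum>q\<in>Q. \<Sum>y\<in>Eset N q. fw q)"
        proof (intro sum_mono)
          fix q :: nat and y :: "nat \<times> nat"
          obtain d c where y: "y = (d,c)" by (cases y)
          have "\<bar>mobius d\<bar> \<le> 1" by (simp add: mobius_def)
          hence "\<bar>mobius d\<bar> * fw q \<le> 1 * fw q" by (intro mult_right_mono fw_nonneg)
          thus "norm (G (q,y)) \<le> fw q"
            using fw_nonneg[of q] by (simp add: G_def y fw_def abs_mult free_ind_nonneg wprod_nonneg mult.assoc)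
        qed
        also have "\<dots> = (\<Sum>q\<in>Q. fw q * real (card (Eset N q)))"
          by (simp add: mult.commute)
        also have "\<dots> \<le> (\<Sum>q\<in>Q. fw q * (real q * real (card {d. d dvd q})))"
        proof (intro sum_mono mult_left_mono fw_nonneg)
          fix q assume q: "q \<in> Q"
          hence q0: "q > 0" using Q1 by auto
          have "card (Eset N q) \<le> card ({d. d dvd q} \<times> {1..q})"
            by (rule card_mono[OF _ Eset_sub]) (use q0 in auto)
          also have "\<dots> = card {d. d dvd q} * q" by (simp add: card_cartesian_product)
          finally show "real (card (Eset N q)) \<le> real q * real (card {d. d dvd q})"
            by (simp add: mult.commute flip: of_nat_mult)
        qed
        also have "\<dots> \<le> exp (8 * real k * real (k+1))"
          unfolding fw_def by (rule euler_bound[OF assms(1) fQ])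
        finally show "(\<Sum>x\<in>F. norm (G x)) \<le> exp (8 * real k * real (k+1))" .
      qed
    qed auto
    thus ?thesis using summable_on_iff_abs_summable_on_real by blast
  qed
  define S where "S = infsum G Y"
  have hasY: "(G has_sum S) Y" using sumG by (simp add: S_def)
  have fib1: "((\<lambda>y. G (q,y)) has_sum (fw q * real (card {m::nat. 1 \<le> m \<and> real m \<le> real q / real N \<and> coprime m q}))) (Eset N q)"
    if q: "q \<in> {1..}" for q
  proof (rule has_sum_finiteI)
    show "finite (Eset N q)" using q by (intro finite_Eset) auto
    have "(\<Sum>y\<in>Eset N q. G (q,y)) = (\<Sum>(d,c)\<in>Eset N q. mobius d * fw q)"
      by (intro sum.cong refl) (auto simp: G_def fw_def mult.assoc)
    also have "\<dots> = (\<Sum>(d,c)\<in>Eset N q. mobius d) * fw q"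
      by (simp add: sum_distrib_right case_prod_beta)
    also have "\<dots> = fw q * real (card {m::nat. 1 \<le> m \<and> real m \<le> real q / real N \<and> coprime m q})"
      using count_identity[of q N] q N0 by simp
    finally show "fw q * real (card {m::nat. 1 \<le> m \<and> real m \<le> real q / real N \<and> coprime m q})
                   = (\<Sum>y\<in>Eset N q. G (q,y))" by simp
  qed
  have "((\<lambda>q. fw q * real (card {m::nat. 1 \<le> m \<and> real m \<le> real q / real N \<and> coprime m q})) has_sum S) {1..}"
    by (rule has_sum_SigmaD[OF hasY[unfolded Y_def] fib1])
  hence Zt: "Ztilde k N = S" unfolding Ztilde_def fw_def by (rule infsumI)
  have hasX: "(F has_sum S) X"
    using has_sum_reindex_bij_betw[OF bij, of G S] hasY FG by simp
  have sumX: "F summable_on X" using hasX summable_on_def by blast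
  have fib2: "((\<lambda>y. F (c,y)) has_sum zk k c) (Sigma (R c) (\<lambda>_. D))" if c: "c \<in> C" for c
  proof -
    have "(\<lambda>(x,y). F (x,y)) summable_on X" using sumX by (simp add: case_prod_eta)
    hence sc: "(\<lambda>y. F (c,y)) summable_on (Sigma (R c) (\<lambda>_. D))"
      using summable_on_SigmaD1[of "\<lambda>x y. F (x,y)" C "\<lambda>c. Sigma (R c) (\<lambda>_. D)" c] c
      by (simp add: X_def)
    have "infsum (\<lambda>y. F (c,y)) (Sigma (R c) (\<lambda>_. D)) =
          infsum (\<lambda>r. infsum (\<lambda>d. F (c,(r,d))) D) (R c)"
      using infsum_Sigma_banach[OF sc] by simp
    also have "\<dots> = zk k c" by (simp add: zk_def F_def R_def D_def)
    finally show ?thesis using sc by (metis has_sum_infsum)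
  qed
  have "(zk k has_sum S) C"
    by (rule has_sum_SigmaD[OF hasX[unfolded X_def] fib2])
  thus ?thesis using Zt by (simp add: C_def)
qed

end
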